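(* Let $T_1$ and $T_2$ be two nontrivial trees with orders $m$ and $n$ respectively. Then $hn_{cc}(T_1\Box T_2)=m+n-1$.
   Context: All graphs are finite, simple and undirected. For a graph $G$ and $S\subseteq V(G)$, the cycle interval $\langle S\rangle$ consists of the vertices of $S$ together with every vertex $w\in V(G)\setminus S$ such that $G[S\cup\{w\}]$ contains a cycle through $w$; $S$ is cycle convex if $\langle S\rangle=S$; the cycle convex hull $\langle S\rangle_C$ is the smallest cycle convex set containing $S$; a hull set is a set $S$ with $\langle S\rangle_C=V(G)$, and $hn_{cc}(G)$ is the minimum cardinality of a hull set. The Cartesian product $G\Box H$ has vertex set $V(G)\times V(H)$, with $(g_1,h_1)\sim(g_2,h_2)$ iff ($g_1\sim g_2$ and $h_1=h_2$) or ($g_1=g_2$ and $h_1\sim h_2$). A tree is nontrivial if it has at least two vertices. *)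

theory Defs
  imports Main
begin

definition simple_graph :: "'a set \<Rightarrow> ('a \<Rightarrow> 'a \<Rightarrow> bool) \<Rightarrow> bool" where
  "simple_graph V E \<longleftrightarrow> finite V \<and> (\<forall>u v. E u v \<longrightarrow> E v u) \<and> (\<forall>v. \<not> E v v)
     \<and> (\<forall>u v. E u v \<longrightarrow> u \<in> V \<and> v \<in> V)"

definition is_cycle :: "('a \<Rightarrow> 'a \<Rightarrow> bool) \<Rightarrow> 'a list \<Rightarrow> bool" where
  "is_cycle E cs \<longleftrightarrow> length cs \<ge> 3 \<and> distinct cs \<and>
     (\<forall>i < length cs. E (cs ! i) (cs ! ((i + 1) mod length cs)))"

definition is_walk :: "'a set \<Rightarrow> ('a \<Rightarrow> 'a \<Rightarrow> bool) \<Rightarrow> 'a list \<Rightarrow> bool" where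
  "is_walk V E xs \<longleftrightarrow> xs \<noteq> [] \<and> set xs \<subseteq> V \<and>
     (\<forall>i. i + 1 < length xs \<longrightarrow> E (xs ! i) (xs ! (i + 1)))"

definition connected_graph :: "'a set \<Rightarrow> ('a \<Rightarrow> 'a \<Rightarrow> bool) \<Rightarrow> bool" where
  "connected_graph V E \<longleftrightarrow> V \<noteq> {} \<and>
     (\<forall>u\<in>V. \<forall>v\<in>V. \<exists>xs. is_walk V E xs \<and> hd xs = u \<and> last xs = v)"

definition is_tree :: "'a set \<Rightarrow> ('a \<Rightarrow> 'a \<Rightarrow> bool) \<Rightarrow> bool" where
  "is_tree V E \<longleftrightarrow> simple_graph V E \<and> connected_graph V E \<and> (\<nexists>cs. is_cycle E cs)"

definition cycle_interval :: "'a set \<Rightarrow> ('a \<Rightarrow> 'a \<Rightarrow> bool) \<Rightarrow> 'a set \<Rightarrow> 'a set" where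
  "cycle_interval V E S = S \<union> {w \<in> V - S. \<exists>cs. is_cycle E cs \<and> set cs \<subseteq> S \<union> {w} \<and> w \<in> set cs}"

definition cycle_convex :: "'a set \<Rightarrow> ('a \<Rightarrow> 'a \<Rightarrow> bool) \<Rightarrow> 'a set \<Rightarrow> bool" where
  "cycle_convex V E S \<longleftrightarrow> S \<subseteq> V \<and> cycle_interval V E S = S"

definition cycle_hull :: "'a set \<Rightarrow> ('a \<Rightarrow> 'a \<Rightarrow> bool) \<Rightarrow> 'a set \<Rightarrow> 'a set" where
  "cycle_hull V E S = \<Inter> {C. S \<subseteq> C \<and> cycle_convex V E C}"

definition cc_hull_set :: "'a set \<Rightarrow> ('a \<Rightarrow> 'a \<Rightarrow> bool) \<Rightarrow> 'a set \<Rightarrow> bool" where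
  "cc_hull_set V E S \<longleftrightarrow> S \<subseteq> V \<and> cycle_hull V E S = V"

definition hn_cc :: "'a set \<Rightarrow> ('a \<Rightarrow> 'a \<Rightarrow> bool) \<Rightarrow> nat" where
  "hn_cc V E = (LEAST k. \<exists>S. cc_hull_set V E S \<and> card S = k)"

definition cart_adj :: "('a \<Rightarrow> 'a \<Rightarrow> bool) \<Rightarrow> ('b \<Rightarrow> 'b \<Rightarrow> bool) \<Rightarrow> ('a \<times> 'b) \<Rightarrow> ('a \<times> 'b) \<Rightarrow> bool" where
  "cart_adj E1 E2 p q \<longleftrightarrow> (E1 (fst p) (fst q) \<and> snd p = snd q) \<or> (fst p = fst q \<and> E2 (snd p) (snd q))"

end

theory Submission
  imports Defs "HOL-Library.Transitive_Closure_Table"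
begin


lemma rpath_nth:
  "rtrancl_path r x xs y \<Longrightarrow> (\<forall>i < length xs. r ((x#xs)!i) (xs!i)) \<and> (xs \<noteq> [] \<longrightarrow> last xs = y) \<and> (xs = [] \<longrightarrow> x = y)"
proof (induction rule: rtrancl_path.induct)
  case (base x) then show ?case by simp
next
  case (step x y ys z)
  show ?case
  proof (intro conjI allI impI)
    fix i assume "i < length (y # ys)"
    then show "r ((x # y # ys) ! i) ((y # ys) ! i)"
      using step by (cases i) auto
  qed (use step in auto)
qed

lemma rpath_set:
  "rtrancl_path r x xs y \<Longrightarrow> \<forall>z \<in> set xs. \<exists>u. r u z"
  by (induction rule: rtrancl_path.induct) auto

lemma tree_sep:
  assumes T: "is_tree V E" and ea1: "E a a1" and ea2: "E a a2" and ne: "a1 \<noteq> a2"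
    and g1: "g (1::nat) = a1" and gN: "g N = a2" and N: "1 \<le> N"
    and st: "\<And>i. 1 \<le> i \<Longrightarrow> i < N \<Longrightarrow> E (g i) (g (Suc i)) \<or> g i = g (Suc i)"
  shows "\<exists>i. 1 \<le> i \<and> i \<le> N \<and> g i = a"
proof (rule ccontr)
  assume nx: "\<not> ?thesis"
  define r where "r = (\<lambda>x y. E x y \<and> x \<noteq> a \<and> y \<noteq> a)"
  have sg: "simple_graph V E" using T unfolding is_tree_def by auto
  have sym: "\<And>x y. E x y \<Longrightarrow> E y x" and irr: "\<And>x. \<not> E x x"
    using sg unfolding simple_graph_def by auto
  have "\<forall>i. 1 \<le> i \<and> i \<le> N \<longrightarrow> r\<^sup>*\<^sup>* a1 (g i)"
  proof (intro allI impI)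
    fix i assume "1 \<le> i \<and> i \<le> N"
    then show "r\<^sup>*\<^sup>* a1 (g i)"
    proof (induction i)
      case 0 then show ?case by simp
    next
      case (Suc j)
      show ?case
      proof (cases "j = 0")
        case True then show ?thesis using g1 by simp
      next
        case False
        then have ih: "r\<^sup>*\<^sup>* a1 (g j)" using Suc by auto
        have "E (g j) (g (Suc j)) \<or> g j = g (Suc j)" using st[of j] Suc False by auto
        moreover have "g j \<noteq> a" "g (Suc j) \<noteq> a" using nx Suc False by auto
        ultimately show ?thesis using ih unfolding r_def
          by (metis (mono_tags, lifting) rtranclp.rtrancl_into_rtrancl)
      qed
    qed
  qed
  then have "r\<^sup>*\<^sup>* a1 a2" using gN N by auto
  then obtain xs where "rtrancl_path r a1 xs a2" using rtranclp_eq_rtrancl_path by metis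
  then obtain ys where p: "rtrancl_path r a1 ys a2" and d: "distinct (a1 # ys)"
    using rtrancl_path_distinct by metis
  note pn = rpath_nth[OF p]
  have ysne: "ys \<noteq> []" using pn ne by auto
  have a1a: "a1 \<noteq> a" using ea1 irr by auto
  have ysa: "a \<notin> set ys" using rpath_set[OF p] unfolding r_def by auto
  define cs where "cs = a # a1 # ys"
  have "is_cycle E cs"
    unfolding is_cycle_def
  proof (intro conjI allI impI)
    show "3 \<le> length cs" using ysne unfolding cs_def by (cases ys) auto
    show "distinct cs" using d ysa a1a unfolding cs_def by auto
    fix i assume i: "i < length cs"
    show "E (cs ! i) (cs ! ((i + 1) mod length cs))"
    proof (cases "i = 0")
      case True then show ?thesis using ea1 ysne unfolding cs_def by simp
    next
      case False
      then obtain j where j: "i = Suc j" by (cases i) auto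
      show ?thesis
      proof (cases "j < length ys")
        case True
        then have "(i+1) mod length cs = i + 1" using j unfolding cs_def by simp
        then show ?thesis using pn True j unfolding cs_def r_def by auto
      next
        case False
        then have jj: "j = length ys" using i j unfolding cs_def by simp
        then have "(i+1) mod length cs = 0" using j unfolding cs_def by simp
        moreover have "cs ! i = a2" using jj j pn ysne unfolding cs_def
          by (simp add: last_conv_nth)
        ultimately show ?thesis using ea2 sym unfolding cs_def by simp
      qed
    qed
  qed
  then show False using T unfolding is_tree_def by auto
qed



lemma conn_induct:
  assumes C: "connected_graph V E" and x0: "x0 \<in> V" and P0: "P x0"
    and stp: "\<And>x y. E x y \<Longrightarrow> x \<in> V \<Longrightarrow> y \<in> V \<Longrightarrow> P x \<Longrightarrow> P y"
    and x: "x \<in> V"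
  shows "P x"
proof -
  obtain xs where w: "is_walk V E xs" and h: "hd xs = x0" and l: "last xs = x"
    using C x0 x unfolding connected_graph_def by blast
  have ne: "xs \<noteq> []" and sub: "set xs \<subseteq> V" and e: "\<And>i. i + 1 < length xs \<Longrightarrow> E (xs!i) (xs!(i+1))"
    using w unfolding is_walk_def by auto
  have "\<forall>i < length xs. P (xs ! i)"
  proof (intro allI impI)
    fix i assume "i < length xs"
    then show "P (xs ! i)"
    proof (induction i)
      case 0 then show ?case using h ne P0 by (simp add: hd_conv_nth)
    next
      case (Suc j)
      then have "P (xs ! j)" "Suc j < length xs" by auto
      moreover have "xs ! j \<in> V" "xs ! Suc j \<in> V" using sub calculation(2) by auto
      ultimately show ?case using e[of j] stp[of "xs!j" "xs!Suc j"] by auto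
    qed
  qed
  then show ?thesis using l ne by (metis diff_less last_conv_nth length_greater_0_conv zero_less_one)
qed

lemma hull_sub: "S \<subseteq> C \<Longrightarrow> cycle_convex V E C \<Longrightarrow> cycle_hull V E S \<subseteq> C"
  unfolding cycle_hull_def by auto

lemma hull_super: "S \<subseteq> V \<Longrightarrow> S \<subseteq> cycle_hull V E S \<and> cycle_hull V E S \<subseteq> V"
proof -
  assume "S \<subseteq> V"
  moreover have "cycle_convex V E V" unfolding cycle_convex_def cycle_interval_def by auto
  ultimately show ?thesis unfolding cycle_hull_def by auto
qed

lemma four_cycle:
  assumes cc: "cycle_convex (V1 \<times> V2) (cart_adj E1 E2) C"
    and s1: "simple_graph V1 E1" and s2: "simple_graph V2 E2"
    and in1: "(x,y) \<in> C" "(x',y) \<in> C" "(x,y') \<in> C"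
    and e1: "E1 x x'" and e2: "E2 y y'"
  shows "(x',y') \<in> C"
proof (rule ccontr)
  assume nin: "(x',y') \<notin> C"
  have sy1: "\<And>u v. E1 u v \<Longrightarrow> E1 v u" and ir1: "\<And>u. \<not> E1 u u" and v1: "\<And>u v. E1 u v \<Longrightarrow> u \<in> V1 \<and> v \<in> V1"
    using s1 unfolding simple_graph_def by auto
  have sy2: "\<And>u v. E2 u v \<Longrightarrow> E2 v u" and ir2: "\<And>u. \<not> E2 u u" and v2: "\<And>u v. E2 u v \<Longrightarrow> u \<in> V2 \<and> v \<in> V2"
    using s2 unfolding simple_graph_def by auto
  have xx: "x \<noteq> x'" using e1 ir1 by auto
  have yy: "y \<noteq> y'" using e2 ir2 by auto
  define cs where "cs = [(x,y),(x',y),(x',y'),(x,y')]"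
  have cyc: "is_cycle (cart_adj E1 E2) cs"
    unfolding is_cycle_def cs_def
  proof (intro conjI allI impI)
    fix i assume "i < length [(x, y), (x', y), (x', y'), (x, y')]"
    then have "i = 0 \<or> i = 1 \<or> i = 2 \<or> i = 3" by auto
    then show "cart_adj E1 E2 ([(x, y), (x', y), (x', y'), (x, y')] ! i)
          ([(x, y), (x', y), (x', y'), (x, y')] ! ((i + 1) mod length [(x, y), (x', y), (x', y'), (x, y')]))"
      using e1 e2 sy1 sy2 unfolding cart_adj_def by auto
  qed (use xx yy in auto)
  have st: "set cs \<subseteq> C \<union> {(x',y')}" "(x',y') \<in> set cs" using in1 unfolding cs_def by auto
  have "(x',y') \<in> V1 \<times> V2 - C" using nin v1[OF e1] v2[OF e2] by auto
  then have "(x',y') \<in> cycle_interval (V1 \<times> V2) (cart_adj E1 E2) C"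
    unfolding cycle_interval_def using cyc st by blast
  then show False using cc nin unfolding cycle_convex_def by auto
qed

lemma upper:
  assumes t1: "is_tree V1 E1" and t2: "is_tree V2 E2" and a0: "a0 \<in> V1" and b0: "b0 \<in> V2"
  shows "cc_hull_set (V1 \<times> V2) (cart_adj E1 E2) (({a0} \<times> V2) \<union> (V1 \<times> {b0}))"
proof -
  let ?S = "({a0} \<times> V2) \<union> (V1 \<times> {b0})"
  have s1: "simple_graph V1 E1" and c1: "connected_graph V1 E1" using t1 unfolding is_tree_def by auto
  have s2: "simple_graph V2 E2" and c2: "connected_graph V2 E2" using t2 unfolding is_tree_def by auto
  have sub: "?S \<subseteq> V1 \<times> V2" using a0 b0 by auto
  have "V1 \<times> V2 \<subseteq> C" if SC: "?S \<subseteq> C" and cc: "cycle_convex (V1 \<times> V2) (cart_adj E1 E2) C" for C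
  proof -
    have "\<forall>b \<in> V2. (a, b) \<in> C" if a: "a \<in> V1" for a
    proof (rule conn_induct[OF c1 a0, where P = "\<lambda>a. \<forall>b \<in> V2. (a, b) \<in> C"])
      show "\<forall>b\<in>V2. (a0, b) \<in> C" using SC by auto
      show "a \<in> V1" by fact
      fix x x' assume e: "E1 x x'" and "x \<in> V1" "x' \<in> V1" and ih: "\<forall>b\<in>V2. (x, b) \<in> C"
      show "\<forall>b\<in>V2. (x', b) \<in> C"
      proof
        fix b assume b: "b \<in> V2"
        show "(x', b) \<in> C"
        proof (rule conn_induct[OF c2 b0, where P = "\<lambda>b. (x', b) \<in> C"])
          show "(x', b0) \<in> C" using SC \<open>x' \<in> V1\<close> by auto
          show "b \<in> V2" by fact
          fix y y' assume "E2 y y'" "y \<in> V2" "y' \<in> V2" "(x', y) \<in> C"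
          then show "(x', y') \<in> C" using four_cycle[OF cc s1 s2 _ _ _ e] ih by auto
        qed
      qed
    qed
    then show ?thesis by auto
  qed
  then have "V1 \<times> V2 \<subseteq> cycle_hull (V1 \<times> V2) (cart_adj E1 E2) ?S"
    unfolding cycle_hull_def by (intro Inter_greatest) auto
  then have "cycle_hull (V1 \<times> V2) (cart_adj E1 E2) ?S = V1 \<times> V2"
    using hull_super[OF sub, of "cart_adj E1 E2"] by auto
  then show ?thesis unfolding cc_hull_set_def using sub by auto
qed

lemma card_cross:
  assumes "finite V1" "finite V2" "a0 \<in> V1" "b0 \<in> V2"
  shows "card (({a0} \<times> V2) \<union> (V1 \<times> {b0})) = card V1 + card V2 - 1"
proof -
  have i: "({a0} \<times> V2) \<inter> (V1 \<times> {b0}) = {(a0,b0)}" using assms by auto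
  have "card (({a0} \<times> V2) \<union> (V1 \<times> {b0})) + card (({a0} \<times> V2) \<inter> (V1 \<times> {b0})) = card ({a0} \<times> V2) + card (V1 \<times> {b0})"
    by (rule card_Un_Int[symmetric]) (use assms in simp_all)
  then show ?thesis using i by (simp add: card_cartesian_product)
qed



definition BX :: "('a \<times> 'b) set \<Rightarrow> ('a + 'b) rel" where
  "BX X = {(Inl a, Inr b) | a b. (a,b) \<in> X} \<union> {(Inr b, Inl a) | a b. (a,b) \<in> X}"

lemma BX_sym: "(u,v) \<in> (BX X)\<^sup>* \<Longrightarrow> (v,u) \<in> (BX X)\<^sup>*"
proof -
  have "sym (BX X)" unfolding BX_def sym_def by auto
  then have "sym ((BX X)\<^sup>*)" by (rule sym_rtrancl)
  then show "(u,v) \<in> (BX X)\<^sup>* \<Longrightarrow> (v,u) \<in> (BX X)\<^sup>*" by (rule symD)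
qed

lemma BX_edge: "(a,b) \<in> X \<Longrightarrow> (Inl a, Inr b) \<in> (BX X)\<^sup>*"
  unfolding BX_def by auto

lemma BX_edge': "(a,b) \<in> X \<Longrightarrow> (Inr b, Inl a) \<in> (BX X)\<^sup>*"
  unfolding BX_def by auto


lemma mod_inj_aux0:
  fixes k i j L :: nat
  assumes "i \<le> j" "j < L" "(k+j) mod L = (k+i) mod L"
  shows "i = j"
proof -
  have "L dvd (k+j) - (k+i)" using mod_eq_dvd_iff_nat[of "k+i" "k+j" L] assms by auto
  then have "L dvd j - i" by simp
  moreover have "j - i < L" using assms by auto
  ultimately have "j - i = 0" using nat_dvd_not_less by (metis gr0I)
  then show ?thesis using assms by auto
qed
lemma mod_inj_aux:
  fixes k i j L :: nat
  assumes "i < L" "j < L" "(k+i) mod L = (k+j) mod L"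
  shows "i = j"
  using mod_inj_aux0[of i j L k] mod_inj_aux0[of j i L k] assms by (cases "i \<le> j") auto

lemma cycle_key:
  assumes t1: "is_tree V1 E1" and t2: "is_tree V2 E2"
    and XV: "X \<subseteq> V1 \<times> V2" and wX: "w \<notin> X"
    and cyc: "is_cycle (cart_adj E1 E2) cs" and sub: "set cs \<subseteq> X \<union> {w}" and win: "w \<in> set cs"
  shows "(Inl (fst w), Inr (snd w)) \<in> (BX X)\<^sup>*"
proof -
  have s1: "simple_graph V1 E1" using t1 unfolding is_tree_def by auto
  have s2: "simple_graph V2 E2" using t2 unfolding is_tree_def by auto
  have sy1: "\<And>u v. E1 u v \<Longrightarrow> E1 v u" using s1 unfolding simple_graph_def by auto
  have sy2: "\<And>u v. E2 u v \<Longrightarrow> E2 v u" using s2 unfolding simple_graph_def by auto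
  define L where "L = length cs"
  have L3: "L \<ge> 3" and dist: "distinct cs"
    and ca: "\<And>i. i < L \<Longrightarrow> cart_adj E1 E2 (cs ! i) (cs ! ((i + 1) mod L))"
    using cyc unfolding is_cycle_def L_def by auto
  obtain k where k: "k < L" "cs ! k = w" using win unfolding L_def by (metis in_set_conv_nth)
  define f where "f i = cs ! ((k + i) mod L)" for i
  have adj: "cart_adj E1 E2 (f i) (f (Suc i))" for i
  proof -
    have "(k + i) mod L < L" using L3 by auto
    from ca[OF this] show ?thesis unfolding f_def by (simp add: mod_Suc_eq)
  qed
  have f0: "f 0 = w" using k unfolding f_def by simp
  have fL: "f L = w" using k unfolding f_def by simp
  have finj: "f i = f j \<Longrightarrow> i < L \<Longrightarrow> j < L \<Longrightarrow> i = j" for i j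
  proof -
    assume "f i = f j" "i < L" "j < L"
    moreover have "(k+i) mod L < L" "(k+j) mod L < L" using L3 by auto
    ultimately have "(k + i) mod L = (k + j) mod L"
      using dist L3 nth_eq_iff_index_eq[OF dist, of "(k + i) mod L" "(k + j) mod L"] unfolding f_def L_def by auto
    then show "i = j" using mod_inj_aux \<open>i < L\<close> \<open>j < L\<close> by blast
  qed
  have fmem: "f i \<in> set cs" for i
  proof -
    have "0 < length cs" using L3 unfolding L_def by linarith
    then have "(k+i) mod L < length cs" unfolding L_def by (rule mod_less_divisor)
    then show ?thesis unfolding f_def by (rule nth_mem)
  qed
  have fX: "f i \<in> X" if "1 \<le> i" "i < L" for i
  proof -
    have "f i \<noteq> w" using finj[of i 0] f0 that L3 by auto
    then show ?thesis using fmem[of i] sub by auto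
  qed
  define R where "R = (BX X)\<^sup>*"
  define c where "c = (Inl (fst (f 1)) :: 'a + 'b)"
  have cl: "(c, Inl (fst (f i))) \<in> R \<and> (c, Inr (snd (f i))) \<in> R" if "1 \<le> i" "i < L" for i
    using that
  proof (induction i)
    case 0 then show ?case by simp
  next
    case (Suc j)
    show ?case
    proof (cases "j = 0")
      case True
      then show ?thesis using fX[of 1] L3 BX_edge[of "fst (f 1)" "snd (f 1)" X] unfolding c_def R_def by auto
    next
      case False
      then have ih: "(c, Inl (fst (f j))) \<in> R" "(c, Inr (snd (f j))) \<in> R" using Suc by auto
      have xj: "f (Suc j) \<in> X" using fX Suc by auto
      have e1: "(Inl (fst (f (Suc j))), Inr (snd (f (Suc j)))) \<in> R"
        using BX_edge[of "fst (f (Suc j))" "snd (f (Suc j))" X] xj unfolding R_def by auto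
      have e2: "(Inr (snd (f (Suc j))), Inl (fst (f (Suc j)))) \<in> R"
        using BX_edge'[of "fst (f (Suc j))" "snd (f (Suc j))" X] xj unfolding R_def by auto
      from adj[of j] have "fst (f j) = fst (f (Suc j)) \<or> snd (f j) = snd (f (Suc j))"
        unfolding cart_adj_def by auto
      then show ?thesis
      proof
        assume h: "fst (f j) = fst (f (Suc j))"
        then have "(c, Inl (fst (f (Suc j)))) \<in> R" using ih by simp
        moreover from this e1 have "(c, Inr (snd (f (Suc j)))) \<in> R" unfolding R_def by auto
        ultimately show ?thesis by simp
      next
        assume h: "snd (f j) = snd (f (Suc j))"
        then have "(c, Inr (snd (f (Suc j)))) \<in> R" using ih by simp
        moreover from this e2 have "(c, Inl (fst (f (Suc j)))) \<in> R" unfolding R_def by auto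
        ultimately show ?thesis by simp
      qed
    qed
  qed
  define p where "p = f 1"
  define q where "q = f (L - 1)"
  have pq: "p \<noteq> q" using finj[of 1 "L - 1"] L3 unfolding p_def q_def by auto
  have ap: "cart_adj E1 E2 w p" using adj[of 0] f0 unfolding p_def by simp
  have aq: "cart_adj E1 E2 q w" using adj[of "L - 1"] fL L3 unfolding q_def by simp
  have clp: "(c, Inl (fst p)) \<in> R" "(c, Inr (snd p)) \<in> R" using cl[of 1] L3 unfolding p_def by auto
  have clq: "(c, Inl (fst q)) \<in> R" "(c, Inr (snd q)) \<in> R" using cl[of "L - 1"] L3 unfolding q_def by auto
  have stp1: "E1 (fst (f i)) (fst (f (Suc i))) \<or> fst (f i) = fst (f (Suc i))" for i
    using adj[of i] unfolding cart_adj_def by auto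
  have stp2: "E2 (snd (f i)) (snd (f (Suc i))) \<or> snd (f i) = snd (f (Suc i))" for i
    using adj[of i] unfolding cart_adj_def by auto
  have L1: "1 \<le> L - 1" using L3 by simp
  have A: "(c, Inl (fst w)) \<in> R \<and> (c, Inr (snd w)) \<in> R"
  proof (cases "snd p = snd w")
    case True
    have "(c, Inl (fst w)) \<in> R"
    proof (cases "fst q = fst w")
      case True then show ?thesis using clq by simp
    next
      case False
      then have eq: "E1 (fst q) (fst w)" "snd q = snd w" using aq unfolding cart_adj_def by auto
      have ep: "E1 (fst w) (fst p)" using ap \<open>snd p = snd w\<close> s1 s2 unfolding cart_adj_def simple_graph_def by auto
      have ne: "fst p \<noteq> fst q" using pq eq(2) True by (metis prod.expand)
      obtain i where "1 \<le> i" "i \<le> L - 1" "fst (f i) = fst w"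
        using tree_sep[OF t1 ep sy1[OF eq(1)] ne, of "\<lambda>i. fst (f i)" "L - 1"] stp1 L1
        unfolding p_def q_def by auto
      then show ?thesis using cl[of i] L3 by auto
    qed
    then show ?thesis using clp True by simp
  next
    case False
    then have fp: "fst p = fst w" "E2 (snd w) (snd p)" using ap unfolding cart_adj_def by auto
    have "(c, Inr (snd w)) \<in> R"
    proof (cases "snd q = snd w")
      case True then show ?thesis using clq by simp
    next
      case False
      then have eq: "E2 (snd q) (snd w)" "fst q = fst w" using aq unfolding cart_adj_def by auto
      have ne: "snd p \<noteq> snd q" using pq eq(2) fp(1) by (metis prod.expand)
      obtain i where "1 \<le> i" "i \<le> L - 1" "snd (f i) = snd w"
        using tree_sep[OF t2 fp(2) sy2[OF eq(1)] ne, of "\<lambda>i. snd (f i)" "L - 1"] stp2 L1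
        unfolding p_def q_def by auto
      then show ?thesis using cl[of i] L3 by auto
    qed
    then show ?thesis using clp fp by simp
  qed
  have "(Inl (fst w), c) \<in> R" using A BX_sym unfolding R_def by blast
  then show ?thesis using A unfolding R_def by auto
qed



lemma lower:
  assumes t1: "is_tree V1 E1" and t2: "is_tree V2 E2"
    and a0: "a0 \<in> V1" and b0: "b0 \<in> V2"
    and hs: "cc_hull_set (V1 \<times> V2) (cart_adj E1 E2) S"
  shows "card V1 + card V2 - 1 \<le> card S"
proof -
  have f1: "finite V1" using t1 unfolding is_tree_def simple_graph_def by auto
  have f2: "finite V2" using t2 unfolding is_tree_def simple_graph_def by auto
  have SV: "S \<subseteq> V1 \<times> V2" and hull: "cycle_hull (V1 \<times> V2) (cart_adj E1 E2) S = V1 \<times> V2"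
    using hs unfolding cc_hull_set_def by auto
  have fS: "finite S" using SV f1 f2 finite_subset by blast
  define R where "R = (BX S)\<^sup>*"
  define X where "X = {p \<in> V1 \<times> V2. (Inl (fst p), Inr (snd p)) \<in> R}"
  have SX: "S \<subseteq> X" unfolding X_def R_def using SV BX_edge by fastforce
  have "BX X \<subseteq> R"
  proof
    fix e assume "e \<in> BX X"
    then obtain a b where ab: "(a,b) \<in> X" "e = (Inl a, Inr b) \<or> e = (Inr b, Inl a)"
      unfolding BX_def by auto
    then have "(Inl a, Inr b) \<in> R" unfolding X_def by auto
    then show "e \<in> R" using ab BX_sym unfolding R_def by auto
  qed
  then have XR: "(BX X)\<^sup>* \<subseteq> R" unfolding R_def by (rule rtrancl_subset_rtrancl)
  have "cycle_convex (V1 \<times> V2) (cart_adj E1 E2) X"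
    unfolding cycle_convex_def
  proof
    show XV: "X \<subseteq> V1 \<times> V2" unfolding X_def by auto
    show "cycle_interval (V1 \<times> V2) (cart_adj E1 E2) X = X"
    proof
      show "cycle_interval (V1 \<times> V2) (cart_adj E1 E2) X \<subseteq> X"
      proof
        fix w assume "w \<in> cycle_interval (V1 \<times> V2) (cart_adj E1 E2) X"
        then consider "w \<in> X" | cs where "w \<in> V1 \<times> V2" "w \<notin> X" "is_cycle (cart_adj E1 E2) cs"
          "set cs \<subseteq> X \<union> {w}" "w \<in> set cs"
          unfolding cycle_interval_def by auto
        then show "w \<in> X"
        proof cases
          case 1 then show ?thesis .
        next
          case 2
          have "(Inl (fst w), Inr (snd w)) \<in> (BX X)\<^sup>*" by (rule cycle_key[OF t1 t2 XV 2(2-5)])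
          then show ?thesis using XR 2(1) unfolding X_def by auto
        qed
      qed
      show "X \<subseteq> cycle_interval (V1 \<times> V2) (cart_adj E1 E2) X" unfolding cycle_interval_def by auto
    qed
  qed
  from hull_sub[OF SX this] hull have VX: "V1 \<times> V2 \<subseteq> X" by simp
  have con: "(Inl a, Inr b) \<in> R" if "a \<in> V1" "b \<in> V2" for a b
    using VX that unfolding X_def by auto
  define r where "r = (Inl a0 :: 'a + 'b)"
  define U where "U = Inl ` V1 \<union> (Inr ` V2 :: ('a + 'b) set)"
  have reach: "(u, r) \<in> R" if "u \<in> U" for u
  proof -
    have rb: "(Inr b0, r) \<in> R" using con[OF a0 b0] BX_sym unfolding r_def R_def by auto
    show ?thesis
    proof (cases u)
      case (Inl a)
      then have "a \<in> V1" using that unfolding U_def by auto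
      then have "(u, Inr b0) \<in> R" using con b0 Inl by auto
      then show ?thesis using rb unfolding R_def by auto
    next
      case (Inr b)
      then have "b \<in> V2" using that unfolding U_def by auto
      then show ?thesis using con[OF a0] BX_sym Inr unfolding r_def R_def by auto
    qed
  qed
  define d where "d u = (LEAST n. (u, r) \<in> BX S ^^ n)" for u
  define P where "P u p \<longleftrightarrow> p \<in> S \<and> (\<exists>y. d y < d u \<and>
      ((u = Inl (fst p) \<and> y = Inr (snd p)) \<or> (u = Inr (snd p) \<and> y = Inl (fst p))))" for u p
  have exP: "\<exists>p. P u p" if uU: "u \<in> U" and ur: "u \<noteq> r" for u
  proof -
    obtain n where "(u, r) \<in> BX S ^^ n" using reach[OF uU] rtrancl_power unfolding R_def by blast
    then have du: "(u, r) \<in> BX S ^^ (d u)" unfolding d_def by (rule LeastI)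
    have "d u \<noteq> 0" using du ur by (cases "d u") auto
    then obtain k where k: "d u = Suc k" by (cases "d u") auto
    then obtain y where y1: "(u, y) \<in> BX S" and y2: "(y, r) \<in> BX S ^^ k"
      using relpow_Suc_D2 du by metis
    have "d y \<le> k" unfolding d_def using y2 by (rule Least_le)
    then have dy: "d y < d u" using k by simp
    from y1 obtain a b where ab: "(a,b) \<in> S" "(u = Inl a \<and> y = Inr b) \<or> (u = Inr b \<and> y = Inl a)"
      unfolding BX_def by auto
    then have "P u (a,b)" unfolding P_def using dy by auto
    then show ?thesis ..
  qed
  define ed where "ed u = (SOME p. P u p)" for u
  have edP: "P u (ed u)" if "u \<in> U - {r}" for u
  proof -
    have "\<exists>p. P u p" using exP that by blast
    then show ?thesis unfolding ed_def by (rule someI_ex)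
  qed
  have inj: "inj_on ed (U - {r})"
  proof (rule inj_onI)
    fix u u' assume u: "u \<in> U - {r}" and u': "u' \<in> U - {r}" and eq: "ed u = ed u'"
    from edP[OF u] obtain y where y: "d y < d u"
      "(u = Inl (fst (ed u)) \<and> y = Inr (snd (ed u))) \<or> (u = Inr (snd (ed u)) \<and> y = Inl (fst (ed u)))"
      unfolding P_def by auto
    from edP[OF u'] obtain y' where y': "d y' < d u'"
      "(u' = Inl (fst (ed u)) \<and> y' = Inr (snd (ed u))) \<or> (u' = Inr (snd (ed u)) \<and> y' = Inl (fst (ed u)))"
      unfolding P_def eq by auto
    have "u = u' \<or> (y = u' \<and> y' = u)" using y(2) y'(2) by auto
    then show "u = u'" using y(1) y'(1) by auto
  qed
  have img: "ed ` (U - {r}) \<subseteq> S"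
  proof
    fix p assume "p \<in> ed ` (U - {r})"
    then obtain u where "u \<in> U - {r}" "p = ed u" by blast
    then show "p \<in> S" using edP[of u] unfolding P_def by blast
  qed
  have c1: "card (U - {r}) \<le> card S" by (rule card_inj_on_le[OF inj img fS])
  have "card U = card V1 + card V2"
    unfolding U_def
    by (subst card_Un_disjoint) (auto simp: f1 f2 card_image)
  moreover have "r \<in> U" unfolding U_def r_def using a0 by auto
  moreover have "finite U" unfolding U_def using f1 f2 by auto
  ultimately have "card (U - {r}) = card V1 + card V2 - 1" by simp
  then show ?thesis using c1 by simp
qed


theorem mainTheorem11:
  fixes V1 :: "'a set" and E1 :: "'a \<Rightarrow> 'a \<Rightarrow> bool"
    and V2 :: "'b set" and E2 :: "'b \<Rightarrow> 'b \<Rightarrow> bool"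
    and m n :: nat
  assumes "is_tree V1 E1" and "is_tree V2 E2"
    and "card V1 = m" and "card V2 = n"
    and "m \<ge> 2" and "n \<ge> 2"
  shows "hn_cc (V1 \<times> V2) (cart_adj E1 E2) = m + n - 1"
proof -
  have f1: "finite V1" using assms(1) unfolding is_tree_def simple_graph_def by auto
  have f2: "finite V2" using assms(2) unfolding is_tree_def simple_graph_def by auto
  obtain a0 where a0: "a0 \<in> V1" using assms(3,5) by (metis card.empty ex_in_conv not_numeral_le_zero)
  obtain b0 where b0: "b0 \<in> V2" using assms(4,6) by (metis card.empty ex_in_conv not_numeral_le_zero)
  show ?thesis
    unfolding hn_cc_def
  proof (rule Least_equality)
    show "\<exists>S. cc_hull_set (V1 \<times> V2) (cart_adj E1 E2) S \<and> card S = m + n - 1"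
      using upper[OF assms(1,2) a0 b0] card_cross[OF f1 f2 a0 b0] assms(3,4) by blast
  next
    fix k assume "\<exists>S. cc_hull_set (V1 \<times> V2) (cart_adj E1 E2) S \<and> card S = k"
    then obtain S where "cc_hull_set (V1 \<times> V2) (cart_adj E1 E2) S" "card S = k" by blast
    then show "m + n - 1 \<le> k" using lower[OF assms(1,2) a0 b0] assms(3,4) by blast
  qed
qed

end
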